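(* Let $(X,d)$ and $(Y,d')$ be metric spaces, $x_0\in X$, $y_0\in Y$, $n\geq 1$, with induced pseudometrics $\rho$ on $\pi_n(X,x_0)$ and $\rho'$ on $\pi_n(Y,y_0)$. If $f:(X,d)\to(Y,d')$ is uniformly continuous with $f(x_0)=y_0$, then the induced homomorphism $f_\#:(\pi_n(X,x_0),\rho)\to(\pi_n(Y,y_0),\rho')$ is uniformly continuous.
   Context: For a metric space $(Z,\delta)$ with basepoint $z_0$, $\Omega^n(Z,z_0)$ is the set of continuous maps $\alpha:[0,1]^n\to Z$ with $\alpha(\partial[0,1]^n)=\{z_0\}$, with uniform metric $\mu(\alpha,\beta)=\sup_{t}\delta(\alpha(t),\beta(t))$, and the induced pseudometric on $\pi_n(Z,z_0)$ is $\rho(a,b)=\inf\{\mu(\alpha,\beta)\mid\alpha\in a,\beta\in b\}$. *)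

theory Defs
  imports "HOL-Analysis.Analysis"
begin

text \<open>The dimension n >= 1 is encoded by a finite index type 'n; the cube [0,1]^n
  is cbox 0 1 in real^'n, and its boundary is its frontier.\<close>

definition unit_cube :: "(real^'n) set" where
  "unit_cube = cbox 0 1"

definition Omega :: "'a::metric_space \<Rightarrow> (real^'n \<Rightarrow> 'a) set" where
  "Omega z0 = {\<alpha>. continuous_on unit_cube \<alpha> \<and> \<alpha> ` frontier unit_cube \<subseteq> {z0}}"

definition rel_homotopic :: "'a::metric_space \<Rightarrow> (real^'n \<Rightarrow> 'a) \<Rightarrow> (real^'n \<Rightarrow> 'a) \<Rightarrow> bool" where
  "rel_homotopic z0 \<alpha> \<beta> =
     homotopic_with_canon (\<lambda>h. h ` frontier unit_cube \<subseteq> {z0}) unit_cube UNIV \<alpha> \<beta>"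

definition homclass :: "'a::metric_space \<Rightarrow> (real^'n \<Rightarrow> 'a) \<Rightarrow> (real^'n \<Rightarrow> 'a) set" where
  "homclass z0 \<alpha> = {\<beta> \<in> Omega z0. rel_homotopic z0 \<alpha> \<beta>}"

definition pi_n :: "'a::metric_space \<Rightarrow> (real^'n \<Rightarrow> 'a) set set" where
  "pi_n z0 = {homclass z0 \<alpha> | \<alpha>. \<alpha> \<in> Omega z0}"

definition mu :: "(real^'n \<Rightarrow> 'a::metric_space) \<Rightarrow> (real^'n \<Rightarrow> 'a) \<Rightarrow> real" where
  "mu \<alpha> \<beta> = (SUP t\<in>unit_cube. dist (\<alpha> t) (\<beta> t))"

definition rho :: "(real^'n \<Rightarrow> 'a::metric_space) set \<Rightarrow> (real^'n \<Rightarrow> 'a) set \<Rightarrow> real" where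
  "rho a b = Inf {mu \<alpha> \<beta> | \<alpha> \<beta>. \<alpha> \<in> a \<and> \<beta> \<in> b}"

definition induced :: "('a::metric_space \<Rightarrow> 'b::metric_space) \<Rightarrow> 'b \<Rightarrow>
    (real^'n \<Rightarrow> 'a) set \<Rightarrow> (real^'n \<Rightarrow> 'b) set" where
  "induced f y0 a = (\<Union>\<alpha>\<in>a. homclass y0 (f \<circ> \<alpha>))"

end

theory Submission
  imports Defs
begin

lemma cube_ne: "(0::real^'n) \<in> unit_cube"
  by (simp add: unit_cube_def mem_box_cart)

lemma Omega_cont: "\<alpha> \<in> Omega z0 \<Longrightarrow> continuous_on unit_cube \<alpha>"
  by (simp add: Omega_def)

lemma homclass_Omega: "\<beta> \<in> homclass z0 \<alpha> \<Longrightarrow> \<beta> \<in> Omega z0"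
  by (simp add: homclass_def)

lemma bdd_dist:
  fixes \<alpha> \<beta> :: "real^'n \<Rightarrow> 'a::metric_space"
  assumes "continuous_on unit_cube \<alpha>" "continuous_on unit_cube \<beta>"
  shows "bdd_above ((\<lambda>t. dist (\<alpha> t) (\<beta> t)) ` unit_cube)"
proof -
  have "continuous_on unit_cube (\<lambda>t. dist (\<alpha> t) (\<beta> t))"
    using assms by (intro continuous_intros)
  then have "compact ((\<lambda>t. dist (\<alpha> t) (\<beta> t)) ` unit_cube)"
    by (rule compact_continuous_image) (simp add: unit_cube_def)
  then show ?thesis by (intro bounded_imp_bdd_above compact_imp_bounded)
qed

lemma mu_ge:
  fixes \<alpha> \<beta> :: "real^'n \<Rightarrow> 'a::metric_space"
  assumes "continuous_on unit_cube \<alpha>" "continuous_on unit_cube \<beta>" "t \<in> unit_cube"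
  shows "dist (\<alpha> t) (\<beta> t) \<le> mu \<alpha> \<beta>"
  unfolding mu_def using bdd_dist[OF assms(1,2)] assms(3) by (rule cSUP_upper2) simp

lemma mu_nonneg:
  fixes \<alpha> \<beta> :: "real^'n \<Rightarrow> 'a::metric_space"
  assumes "continuous_on unit_cube \<alpha>" "continuous_on unit_cube \<beta>"
  shows "0 \<le> mu \<alpha> \<beta>"
  using mu_ge[OF assms cube_ne] zero_le_dist order_trans by blast

lemma homclass_refl:
  assumes "\<alpha> \<in> Omega z0"
  shows "\<alpha> \<in> homclass z0 \<alpha>"
  using assms unfolding homclass_def rel_homotopic_def Omega_def by auto

theorem proposition4p8:
  fixes f :: "'a::metric_space \<Rightarrow> 'b::metric_space"
    and x0 :: 'a and y0 :: 'b
  assumes "uniformly_continuous_on UNIV f"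
    and "f x0 = y0"
  shows "\<forall>e>0. \<exists>\<delta>>0. \<forall>a\<in>(pi_n x0 :: (real^'n \<Rightarrow> 'a) set set). \<forall>b\<in>pi_n x0.
           rho a b < \<delta> \<longrightarrow> rho (induced f y0 a) (induced f y0 b) < e"
proof (intro allI impI)
  fix e :: real assume e: "e > 0"
  then obtain d where d: "d > 0" and dd: "\<And>x x'. dist x' x < d \<Longrightarrow> dist (f x') (f x) < e/2"
    using assms(1) unfolding uniformly_continuous_on_def by (metis UNIV_I half_gt_zero)
  have fc: "continuous_on UNIV f"
    using assms(1) uniformly_continuous_imp_continuous by blast
  have fO: "f \<circ> \<alpha> \<in> Omega y0" if "\<alpha> \<in> Omega x0" for \<alpha> :: "real^'n \<Rightarrow> 'a"
  proof -
    have "continuous_on unit_cube (f \<circ> \<alpha>)"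
      using that Omega_cont continuous_on_compose continuous_on_subset fc by blast
    moreover have "(f \<circ> \<alpha>) ` frontier unit_cube \<subseteq> {y0}"
      using that assms(2) unfolding Omega_def by auto
    ultimately show ?thesis unfolding Omega_def by auto
  qed
  show "\<exists>\<delta>>0. \<forall>a\<in>(pi_n x0 :: (real^'n \<Rightarrow> 'a) set set). \<forall>b\<in>pi_n x0.
           rho a b < \<delta> \<longrightarrow> rho (induced f y0 a) (induced f y0 b) < e"
  proof (intro exI[of _ d] conjI d ballI impI)
    fix a b :: "(real^'n \<Rightarrow> 'a) set"
    assume a: "a \<in> pi_n x0" and b: "b \<in> pi_n x0" and r: "rho a b < d"
    obtain \<alpha>0 where a0: "a = homclass x0 \<alpha>0" "\<alpha>0 \<in> Omega x0" using a unfolding pi_n_def by auto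
    obtain \<beta>0 where b0: "b = homclass x0 \<beta>0" "\<beta>0 \<in> Omega x0" using b unfolding pi_n_def by auto
    have ne: "{mu \<alpha> \<beta> | \<alpha> \<beta>. \<alpha> \<in> a \<and> \<beta> \<in> b} \<noteq> {}"
      using homclass_refl[OF a0(2)] homclass_refl[OF b0(2)] a0 b0 by blast
    obtain \<alpha> \<beta> where ab: "\<alpha> \<in> a" "\<beta> \<in> b" "mu \<alpha> \<beta> < d"
      using cInf_lessD[OF ne r[unfolded rho_def]] by blast
    have aO: "\<alpha> \<in> Omega x0" and bO: "\<beta> \<in> Omega x0"
      using ab a0 b0 homclass_Omega by blast+
    have pt: "dist (f (\<alpha> t)) (f (\<beta> t)) < e/2" if "t \<in> unit_cube" for t
      using dd mu_ge[OF Omega_cont[OF aO] Omega_cont[OF bO] that] ab(3) by force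
    have m: "mu (f \<circ> \<alpha>) (f \<circ> \<beta>) \<le> e/2"
      unfolding mu_def using cube_ne pt
      by (intro cSUP_least) (auto intro: less_imp_le)
    have ia: "f \<circ> \<alpha> \<in> induced f y0 a" and ib: "f \<circ> \<beta> \<in> induced f y0 b"
      unfolding induced_def using ab homclass_refl fO aO bO by blast+
    have bb: "bdd_below {mu \<gamma> \<eta> | \<gamma> \<eta>. \<gamma> \<in> induced f y0 a \<and> \<eta> \<in> induced f y0 b}"
      by (rule bdd_belowI[of _ 0]) (auto simp: induced_def intro!: mu_nonneg Omega_cont dest!: homclass_Omega)
    have "rho (induced f y0 a) (induced f y0 b) \<le> mu (f \<circ> \<alpha>) (f \<circ> \<beta>)"
      unfolding rho_def using ia ib by (intro cInf_lower[OF _ bb]) blast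
    with m e show "rho (induced f y0 a) (induced f y0 b) < e" by linarith
  qed
qed

end
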